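(* Let $(y_1,u_1)$ and $(y_2,u_2)$ be the solutions on $[0,\pi]$ of the homogeneous system $$y' = Qy + u,\qquad u' = (C-Q^2)y - Qu$$ which satisfy the initial conditions $y_1(0)=1,\ u_1(0)=0$ and $y_2(0)=0,\ u_2(0)=1$. If $y_2(\pi)\neq 0$, then the non-homogeneous system $$y' = Qy + u,\qquad u' = (C-Q^2)y - Qu + f$$ has, for each $f\in L^2([0,\pi])$, a unique solution $(y,u)=(R_1(f),R_2(f))$ such that $y(0)=0$ and $y(\pi)=0$. Moreover, $R_1$ is a linear continuous operator from $L^2([0,\pi])$ into $H^1([0,\pi])$, and $R_2$ is a linear continuous operator in $L^2([0,\pi])$ with range in $W^1_1([0,\pi])$.
   Context: Here $v = C + Q'$ is a $\pi$-periodic potential in $H^{-1}_{loc}(\mathbb{R})$, where $C$ is a constant and $Q\in L^2_{loc}(\mathbb{R})$ is $\pi$-periodic with $\frac{1}{\pi}\int_0^\pi Q(x)\,dx = 0$. The non-homogeneous system arises from rewriting $-(y'-Qy)' - Qy' + Cy = f$ using the quasi-derivative $u = y' - Qy$; its coefficients are in $L^1$, so solutions $(y,u)$ with $y,u\in W^1_1([0,\pi])$ exist and are unique for given initial data. $H^1([0,\pi])$ is the Sobolev space of absolutely continuous functions with derivative in $L^2([0,\pi])$. *)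

theory Defs
  imports "HOL-Analysis.Analysis"
begin

definition L2_on :: "real set \<Rightarrow> (real \<Rightarrow> complex) \<Rightarrow> bool" where
  "L2_on S h \<longleftrightarrow> set_borel_measurable lborel S h \<and>
     set_integrable lborel S (\<lambda>t. (cmod (h t))^2)"

definition L2_norm :: "real set \<Rightarrow> (real \<Rightarrow> complex) \<Rightarrow> real" where
  "L2_norm S h = sqrt (set_lebesgue_integral lborel S (\<lambda>t. (cmod (h t))^2))"

definition L2_loc :: "(real \<Rightarrow> complex) \<Rightarrow> bool" where
  "L2_loc h \<longleftrightarrow> h \<in> borel_measurable lborel \<and> (\<forall>a b. L2_on {a..b} h)"

text \<open>W^1_1([0,pi]): y is the indefinite integral of an L^1 function (absolute continuity).\<close>
definition W11 :: "(real \<Rightarrow> complex) \<Rightarrow> bool" where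
  "W11 y \<longleftrightarrow> (\<exists>g. set_integrable lborel {0..pi} g \<and>
     (\<forall>x\<in>{0..pi}. y x = y 0 + set_lebesgue_integral lborel {0..x} g))"

definition has_weak_deriv :: "(real \<Rightarrow> complex) \<Rightarrow> (real \<Rightarrow> complex) \<Rightarrow> bool" where
  "has_weak_deriv y g \<longleftrightarrow> set_integrable lborel {0..pi} g \<and>
     (\<forall>x\<in>{0..pi}. y x = y 0 + set_lebesgue_integral lborel {0..x} g)"

definition H1 :: "(real \<Rightarrow> complex) \<Rightarrow> bool" where
  "H1 y \<longleftrightarrow> (\<exists>g. L2_on {0..pi} g \<and> has_weak_deriv y g)"

definition sol_sys :: "complex \<Rightarrow> (real \<Rightarrow> complex) \<Rightarrow> (real \<Rightarrow> complex)
    \<Rightarrow> (real \<Rightarrow> complex) \<Rightarrow> (real \<Rightarrow> complex) \<Rightarrow> bool" where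
  "sol_sys C Q f y u \<longleftrightarrow>
     has_weak_deriv y (\<lambda>t. Q t * y t + u t) \<and>
     has_weak_deriv u (\<lambda>t. (C - (Q t)^2) * y t - Q t * u t + f t)"

end

theory Submission
  imports Defs
begin

abbreviation LI :: "(real \<Rightarrow> complex) \<Rightarrow> real \<Rightarrow> complex" where
  "LI g x \<equiv> set_lebesgue_integral lborel {0..x} g"

lemma SI_sub:
  fixes g :: "real \<Rightarrow> complex"
  assumes "set_integrable lborel {a..b} g" "a \<le> c" "d \<le> b"
  shows "set_integrable lborel {c..d} g"
  by (rule set_integrable_subset[OF assms(1)]) (use assms in auto)

lemma LI_HK:
  fixes g :: "real \<Rightarrow> complex"
  assumes "set_integrable lborel {0..b} g" "x \<le> b"
  shows "LI g x = integral {0..x} g"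
  using set_borel_integral_eq_integral(2)[OF SI_sub[OF assms(1) order_refl assms(2)]] .

lemma LI_cont:
  fixes g :: "real \<Rightarrow> complex"
  assumes "set_integrable lborel {0..b} g"
  shows "continuous_on {0..b} (LI g)"
proof -
  have "g integrable_on {0..b}" using set_borel_integral_eq_integral(1)[OF assms] .
  then have "continuous_on {0..b} (\<lambda>x. integral {0..x} g)" by (rule indefinite_integral_continuous_1)
  then show ?thesis
    by (rule continuous_on_eq) (use LI_HK[OF assms] in auto)
qed

lemma cont_bound:
  fixes F :: "real \<Rightarrow> complex"
  assumes "continuous_on {a..b} F"
  obtains M where "M > 0" "\<And>x. x \<in> {a..b} \<Longrightarrow> norm (F x) \<le> M"
proof -
  have "bounded (F ` {a..b})"
    by (rule compact_imp_bounded[OF compact_continuous_image[OF assms]]) simp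
  then obtain M where "M > 0" "\<forall>y\<in>F ` {a..b}. norm y \<le> M" by (auto simp: bounded_pos)
  then show ?thesis using that by auto
qed

lemma cont_meas:
  fixes F :: "real \<Rightarrow> complex"
  assumes "continuous_on {a..b} F"
  shows "set_borel_measurable lborel {a..b} F"
  unfolding set_borel_measurable_def
  using borel_measurable_continuous_on_indicator[OF _ assms] by simp

lemma cont_mult_int:
  fixes F g :: "real \<Rightarrow> complex"
  assumes F: "continuous_on {a..b} F" and g: "set_integrable lborel {a..b} g"
  shows "set_integrable lborel {a..b} (\<lambda>t. F t * g t)"
proof -
  obtain M where M: "M > 0" "\<And>x. x \<in> {a..b} \<Longrightarrow> norm (F x) \<le> M" using cont_bound[OF F] by blast
  have gm: "set_borel_measurable lborel {a..b} g"
    using g unfolding set_integrable_def set_borel_measurable_def by auto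
  have Fm: "set_borel_measurable lborel {a..b} F" by (rule cont_meas[OF F])
  have meas: "set_borel_measurable lborel {a..b} (\<lambda>t. F t * g t)"
  proof -
    have "(\<lambda>x. (indicator {a..b} x *\<^sub>R F x) * (indicator {a..b} x *\<^sub>R g x)) \<in> borel_measurable lborel"
      using Fm gm unfolding set_borel_measurable_def by measurable
    moreover have "(\<lambda>x. (indicator {a..b} x *\<^sub>R F x) * (indicator {a..b} x *\<^sub>R g x)) =
        (\<lambda>x. indicator {a..b} x *\<^sub>R (F x * g x))"
      by (auto simp: indicator_def)
    ultimately show ?thesis unfolding set_borel_measurable_def by simp
  qed
  have Mg: "set_integrable lborel {a..b} (\<lambda>t. complex_of_real M * g t)"
    using g by (rule set_integrable_mult_right)
  show ?thesis
    by (rule set_integrable_bound[OF Mg meas]) (auto intro!: AE_I2 mult_right_mono simp: norm_mult M(2) abs_of_pos[OF M(1)])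
qed

lemma LI_zero: "LI g 0 = 0" for g :: "real \<Rightarrow> complex"
proof -
  have "AE x in lborel. indicator {0..0::real} x *\<^sub>R g x = 0"
    using AE_lborel_singleton[of 0] by eventually_elim auto
  then show ?thesis unfolding set_lebesgue_integral_def by (simp add: integral_eq_zero_AE)
qed



lemma LI_split:
  fixes h :: "real \<Rightarrow> complex"
  assumes h: "set_integrable lborel {0..x} h" and s: "0 \<le> s" "s \<le> x"
  shows "LI h s + set_lebesgue_integral lborel {s..x} h = LI h x"
proof -
  have hi: "h integrable_on {0..x}" using set_borel_integral_eq_integral(1)[OF h] .
  have "LI h s = integral {0..s} h" using LI_HK[OF h s(2)] .
  moreover have "set_lebesgue_integral lborel {s..x} h = integral {s..x} h"
    using set_borel_integral_eq_integral(2)[OF SI_sub[OF h s(1) order_refl]] .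
  moreover have "LI h x = integral {0..x} h" using LI_HK[OF h order_refl] .
  ultimately show ?thesis using Henstock_Kurzweil_Integration.integral_combine[OF s hi] by simp
qed

lemma core:
  fixes g h :: "real \<Rightarrow> complex"
  assumes g: "set_integrable lborel {0..x} g" and h: "set_integrable lborel {0..x} h" and x: "0 \<le> x"
  shows "LI g x * LI h x = LI (\<lambda>s. g s * LI h s) x + LI (\<lambda>t. LI g t * h t) x"
proof -
  define gg where "gg = (\<lambda>s. indicator {0..x} s *\<^sub>R g s)"
  define hh where "hh = (\<lambda>s. indicator {0..x} s *\<^sub>R h s)"
  have gg: "integrable lborel gg" using g unfolding gg_def set_integrable_def .
  have hh: "integrable lborel hh" using h unfolding hh_def set_integrable_def .
  have [measurable]: "gg \<in> borel_measurable lborel" "hh \<in> borel_measurable lborel" using gg hh by auto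
  define B where "B = (\<lambda>s t. indicator {0..x} s *\<^sub>R (g s * (indicator {s..x} t *\<^sub>R h t)))"
  have B_alt: "B s t = of_real (indicator {(s,t). s \<le> t} (s,t)) * (gg s * hh t)" for s t
    by (auto simp: B_def gg_def hh_def indicator_def)
  have B_alt2: "B s t = gg s * (indicator {s..} t *\<^sub>R hh t)" for s t
    by (auto simp: B_def gg_def hh_def indicator_def)
  have Bm: "(\<lambda>(s,t). B s t) \<in> borel_measurable (lborel \<Otimes>\<^sub>M lborel)"
    unfolding B_alt by measurable
  have Bnm: "(\<lambda>(s,t). norm (B s t)) \<in> borel_measurable (lborel \<Otimes>\<^sub>M lborel)"
    using Bm by measurable
  have hint: "integrable lborel (\<lambda>t. indicator {s..} t *\<^sub>R hh t)" for s
    by (rule integrable_mult_indicator) (auto simp: hh)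
  have Bint_t: "integrable lborel (\<lambda>t. B s t)" for s
    unfolding B_alt2 by (rule integrable_mult_right) (rule hint)
  have Bint: "integrable (lborel \<Otimes>\<^sub>M lborel) (\<lambda>(s,t). B s t)"
  proof (rule lborel_pair.Fubini_integrable)
    show "(\<lambda>(s,t). B s t) \<in> borel_measurable (lborel \<Otimes>\<^sub>M lborel)" by (rule Bm)
    show "AE s in lborel. integrable lborel (\<lambda>t. case (s, t) of (s, t) \<Rightarrow> B s t)"
      using Bint_t by simp
    have m: "(\<lambda>s. \<integral>t. norm (B s t) \<partial>lborel) \<in> borel_measurable lborel"
      by (rule lborel.borel_measurable_lebesgue_integral) (use Bnm in simp)
    have bnd: "norm (\<integral>t. norm (B s t) \<partial>lborel) \<le> norm (norm (gg s) * (\<integral>t. norm (hh t) \<partial>lborel))" for s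
    proof -
      have "(\<integral>t. norm (B s t) \<partial>lborel) \<le> (\<integral>t. norm (gg s) * norm (hh t) \<partial>lborel)"
      proof (rule integral_mono)
        show "integrable lborel (\<lambda>t. norm (B s t))" using Bint_t by auto
        show "integrable lborel (\<lambda>t. norm (gg s) * norm (hh t))" using hh by auto
        show "norm (B s t) \<le> norm (gg s) * norm (hh t)" for t
          unfolding B_alt2 by (auto simp: norm_mult indicator_def)
      qed
      moreover have "0 \<le> (\<integral>t. norm (B s t) \<partial>lborel)" by simp
      ultimately show ?thesis by simp
    qed
    show "integrable lborel (\<lambda>s. \<integral>t. norm (case (s, t) of (s, t) \<Rightarrow> B s t) \<partial>lborel)"
      using Bochner_Integration.integrable_bound[OF _ m, of "\<lambda>s. norm (gg s) * (\<integral>t. norm (hh t) \<partial>lborel)"] bnd gg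
      by auto
  qed
  have inner_s: "(\<integral>s. B s t \<partial>lborel) = indicator {0..x} t *\<^sub>R (LI g t * h t)" for t
  proof -
    have "(\<lambda>s. B s t) = (\<lambda>s. indicator {0..x} t *\<^sub>R ((indicator {0..t} s *\<^sub>R g s) * h t))"
      by (auto simp: B_def indicator_def)
    then have "(\<integral>s. B s t \<partial>lborel) = (\<integral>s. indicator {0..x} t *\<^sub>R ((indicator {0..t} s *\<^sub>R g s) * h t) \<partial>lborel)"
      by (simp only:)
    also have "\<dots> = indicator {0..x} t *\<^sub>R (\<integral>s. (indicator {0..t} s *\<^sub>R g s) * h t \<partial>lborel)"
      by (rule integral_scaleR_right)
    also have "(\<integral>s. (indicator {0..t} s *\<^sub>R g s) * h t \<partial>lborel) = (\<integral>s. indicator {0..t} s *\<^sub>R g s \<partial>lborel) * h t"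
      by (rule integral_mult_left_zero)
    finally show ?thesis by (simp add: set_lebesgue_integral_def)
  qed
  have inner_t: "(\<integral>t. B s t \<partial>lborel) = indicator {0..x} s *\<^sub>R (g s * set_lebesgue_integral lborel {s..x} h)" for s
    unfolding B_def set_lebesgue_integral_def
    by (simp only: integral_scaleR_right integral_mult_right_zero)
  have Fub: "(\<integral>t. (\<integral>s. B s t \<partial>lborel) \<partial>lborel) = (\<integral>s. (\<integral>t. B s t \<partial>lborel) \<partial>lborel)"
    using lborel_pair.Fubini_integral[of B] Bint by simp
  have int2: "integrable lborel (\<lambda>s. (\<integral>t. B s t \<partial>lborel))"
    using lborel_pair.integrable_fst'[OF Bint] by simp
  have Hc: "continuous_on {0..x} (LI h)" by (rule LI_cont[OF h])
  have int1: "set_integrable lborel {0..x} (\<lambda>s. g s * LI h s)"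
    using cont_mult_int[OF Hc g] by (simp add: mult.commute)
  have "LI (\<lambda>s. g s * LI h s) x + LI (\<lambda>t. LI g t * h t) x
     = (\<integral>s. indicator {0..x} s *\<^sub>R (g s * LI h s) \<partial>lborel) + (\<integral>s. (\<integral>t. B s t \<partial>lborel) \<partial>lborel)"
    using Fub by (simp add: inner_s set_lebesgue_integral_def)
  also have "\<dots> = (\<integral>s. indicator {0..x} s *\<^sub>R (g s * LI h s) + (\<integral>t. B s t \<partial>lborel) \<partial>lborel)"
    by (rule Bochner_Integration.integral_add[symmetric]) (use int1 int2 in \<open>auto simp: set_integrable_def\<close>)
  also have "\<dots> = (\<integral>s. (indicator {0..x} s *\<^sub>R g s) * LI h x \<partial>lborel)"
  proof (rule Bochner_Integration.integral_cong[OF refl])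
    fix s
    show "indicator {0..x} s *\<^sub>R (g s * LI h s) + (\<integral>t. B s t \<partial>lborel) = (indicator {0..x} s *\<^sub>R g s) * LI h x"
    proof (cases "s \<in> {0..x}")
      case True
      then show ?thesis using LI_split[OF h, of s]
        by (auto simp: inner_t algebra_simps simp flip: distrib_left)
    qed (simp add: inner_t)
  qed
  also have "\<dots> = LI g x * LI h x"
    unfolding set_lebesgue_integral_def by (rule integral_mult_left_zero)
  finally show ?thesis by simp
qed


lemma AC_cont:
  fixes F g :: "real \<Rightarrow> complex"
  assumes g: "set_integrable lborel {0..b} g" and F: "\<forall>x\<in>{0..b}. F x = F 0 + LI g x"
  shows "continuous_on {0..b} F"
proof -
  have "continuous_on {0..b} (\<lambda>x. F 0 + LI g x)"
    by (intro continuous_intros LI_cont[OF g])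
  then show ?thesis by (rule continuous_on_eq) (use F in metis)
qed

lemma LI_cong:
  fixes f g :: "real \<Rightarrow> complex"
  assumes "\<And>t. t \<in> {0..x} \<Longrightarrow> f t = g t"
  shows "LI f x = LI g x"
  by (rule set_lebesgue_integral_cong) (use assms in auto)

lemma prod_rule:
  fixes F G g h :: "real \<Rightarrow> complex"
  assumes g: "set_integrable lborel {0..b} g" and h: "set_integrable lborel {0..b} h"
    and F: "\<forall>x\<in>{0..b}. F x = F 0 + LI g x" and G: "\<forall>x\<in>{0..b}. G x = G 0 + LI h x"
  shows "set_integrable lborel {0..b} (\<lambda>t. g t * G t + F t * h t)"
    and "\<forall>x\<in>{0..b}. F x * G x = F 0 * G 0 + LI (\<lambda>t. g t * G t + F t * h t) x"
proof -
  have Fc: "continuous_on {0..b} F" by (rule AC_cont[OF g F])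
  have Gc: "continuous_on {0..b} G" by (rule AC_cont[OF h G])
  have i1: "set_integrable lborel {0..b} (\<lambda>t. g t * G t)"
    using cont_mult_int[OF Gc g] by (simp add: mult.commute)
  have i2: "set_integrable lborel {0..b} (\<lambda>t. F t * h t)"
    using cont_mult_int[OF Fc h] .
  show "set_integrable lborel {0..b} (\<lambda>t. g t * G t + F t * h t)"
    by (rule set_integral_add[OF i1 i2])
  show "\<forall>x\<in>{0..b}. F x * G x = F 0 * G 0 + LI (\<lambda>t. g t * G t + F t * h t) x"
  proof
    fix x assume x: "x \<in> {0..b}"
    have gx: "set_integrable lborel {0..x} g" using SI_sub[OF g order_refl] x by auto
    have hx: "set_integrable lborel {0..x} h" using SI_sub[OF h order_refl] x by auto
    have i1x: "set_integrable lborel {0..x} (\<lambda>t. g t * G t)" using SI_sub[OF i1 order_refl] x by auto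
    have i2x: "set_integrable lborel {0..x} (\<lambda>t. F t * h t)" using SI_sub[OF i2 order_refl] x by auto
    have Hc: "continuous_on {0..x} (LI h)" by (rule LI_cont[OF hx])
    have Gc': "continuous_on {0..x} (LI g)" by (rule LI_cont[OF gx])
    have j1: "set_integrable lborel {0..x} (\<lambda>t. g t * LI h t)"
      using cont_mult_int[OF Hc gx] by (simp add: mult.commute)
    have j2: "set_integrable lborel {0..x} (\<lambda>t. LI g t * h t)"
      using cont_mult_int[OF Gc' hx] .
    have e1: "LI (\<lambda>t. g t * G t) x = G 0 * LI g x + LI (\<lambda>t. g t * LI h t) x"
    proof -
      have "LI (\<lambda>t. g t * G t) x = LI (\<lambda>t. G 0 * g t + g t * LI h t) x"
      proof (rule LI_cong)
        fix t assume t: "t \<in> {0..x}"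
        then have "G t = G 0 + LI h t" using G x by (metis atLeastAtMost_iff order_trans)
        then show "g t * G t = G 0 * g t + g t * LI h t" by (simp add: algebra_simps)
      qed
      also have "\<dots> = LI (\<lambda>t. G 0 * g t) x + LI (\<lambda>t. g t * LI h t) x"
        by (rule set_integral_add(2)) (use gx j1 in \<open>auto intro: set_integrable_mult_right\<close>)
      also have "LI (\<lambda>t. G 0 * g t) x = G 0 * LI g x"
        by (rule set_integral_mult_right)
      finally show ?thesis .
    qed
    have e2: "LI (\<lambda>t. F t * h t) x = F 0 * LI h x + LI (\<lambda>t. LI g t * h t) x"
    proof -
      have "LI (\<lambda>t. F t * h t) x = LI (\<lambda>t. F 0 * h t + LI g t * h t) x"
      proof (rule LI_cong)
        fix t assume t: "t \<in> {0..x}"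
        then have "F t = F 0 + LI g t" using F x by (metis atLeastAtMost_iff order_trans)
        then show "F t * h t = F 0 * h t + LI g t * h t" by (simp add: algebra_simps)
      qed
      also have "\<dots> = LI (\<lambda>t. F 0 * h t) x + LI (\<lambda>t. LI g t * h t) x"
        by (rule set_integral_add(2)) (use hx j2 in \<open>auto intro: set_integrable_mult_right\<close>)
      also have "LI (\<lambda>t. F 0 * h t) x = F 0 * LI h x"
        by (rule set_integral_mult_right)
      finally show ?thesis .
    qed
    have "LI (\<lambda>t. g t * G t + F t * h t) x = LI (\<lambda>t. g t * G t) x + LI (\<lambda>t. F t * h t) x"
      by (rule set_integral_add(2)[OF i1x i2x])
    moreover have "LI g x * LI h x = LI (\<lambda>s. g s * LI h s) x + LI (\<lambda>t. LI g t * h t) x"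
      by (rule core[OF gx hx]) (use x in auto)
    moreover have "F x * G x = (F 0 + LI g x) * (G 0 + LI h x)"
    proof -
      have "F x = F 0 + LI g x" "G x = G 0 + LI h x" using bspec[OF F x] bspec[OF G x] by simp_all
      then show ?thesis by simp
    qed
    ultimately show "F x * G x = F 0 * G 0 + LI (\<lambda>t. g t * G t + F t * h t) x"
      using e1 e2 by (simp add: algebra_simps)
  qed
qed


lemma L2_meas: "L2_on S h \<Longrightarrow> set_borel_measurable lborel S h"
  by (simp add: L2_on_def)

lemma le_sq1: "(x::real) \<le> 1 + x^2"
proof (cases "x \<le> 1")
  case True then show ?thesis by (smt (verit) zero_le_power2)
next
  case False then have "x \<le> x * x" by (simp add: mult_le_cancel_left1)
  then show ?thesis by (simp add: power2_eq_square)
qed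

lemma L2_int:
  fixes h :: "real \<Rightarrow> complex"
  assumes "L2_on {a..b} h"
  shows "set_integrable lborel {a..b} h"
proof -
  have sq: "set_integrable lborel {a..b} (\<lambda>t. (cmod (h t))^2)" using assms by (simp add: L2_on_def)
  have one: "set_integrable lborel {a..b} (\<lambda>t. 1::real)"
    by (rule borel_integrable_atLeastAtMost') simp
  have int: "set_integrable lborel {a..b} (\<lambda>t. 1 + (cmod (h t))^2)"
    by (rule set_integral_add(1)[OF one sq])
  have bd: "norm (h t) \<le> norm (1 + (cmod (h t))^2)" for t
  proof -
    have "cmod (h t) \<le> 1 + (cmod (h t))^2"
      by (rule le_sq1)
    then show ?thesis by simp
  qed
  show ?thesis
    by (rule set_integrable_bound[OF int L2_meas[OF assms]]) (rule AE_I2, use bd in blast)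
qed

lemma L2_sq:
  fixes h :: "real \<Rightarrow> complex"
  assumes "L2_on {a..b} h"
  shows "set_integrable lborel {a..b} (\<lambda>t. (h t)^2)"
proof -
  have sq: "set_integrable lborel {a..b} (\<lambda>t. (cmod (h t))^2)" using assms by (simp add: L2_on_def)
  have m: "set_borel_measurable lborel {a..b} h" by (rule L2_meas[OF assms])
  have m2: "set_borel_measurable lborel {a..b} (\<lambda>t. (h t)^2)"
  proof -
    have "(\<lambda>x. (indicator {a..b} x *\<^sub>R h x) * (indicator {a..b} x *\<^sub>R h x)) \<in> borel_measurable lborel"
      using m unfolding set_borel_measurable_def by measurable
    moreover have "(\<lambda>x. (indicator {a..b} x *\<^sub>R h x) * (indicator {a..b} x *\<^sub>R h x)) = (\<lambda>x. indicator {a..b} x *\<^sub>R (h x)^2)"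
      by (auto simp: indicator_def power2_eq_square)
    ultimately show ?thesis unfolding set_borel_measurable_def by simp
  qed
  show ?thesis
    by (rule set_integrable_bound[OF sq m2]) (rule AE_I2, simp add: norm_power)
qed


lemma hwdD:
  assumes "has_weak_deriv y g"
  shows "set_integrable lborel {0..pi} g" "\<forall>x\<in>{0..pi}. y x = y 0 + LI g x"
  using assms unfolding has_weak_deriv_def by blast+

lemma hwdI:
  assumes "set_integrable lborel {0..pi} g" "\<And>x. x \<in> {0..pi} \<Longrightarrow> y x = y 0 + LI g x"
  shows "has_weak_deriv y g"
  using assms unfolding has_weak_deriv_def by blast

lemma hwd_cong:
  assumes "has_weak_deriv y g" "\<And>t. t \<in> {0..pi} \<Longrightarrow> g t = g' t"
  shows "has_weak_deriv y g'"
proof -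
  have "set_integrable lborel {0..pi} g'"
    using hwdD(1)[OF assms(1)] set_integrable_cong[of lborel lborel "{0..pi}" "{0..pi}" g g'] assms(2) by simp
  moreover have "LI g x = LI g' x" if "x \<in> {0..pi}" for x
    by (rule LI_cong) (use assms that in auto)
  ultimately show ?thesis
  proof (intro hwdI)
    fix x assume x: "x \<in> {0..pi}"
    have "y x = y 0 + LI g x" using bspec[OF hwdD(2)[OF assms(1)] x] .
    then show "y x = y 0 + LI g' x" using \<open>\<And>x. x \<in> {0..pi} \<Longrightarrow> LI g x = LI g' x\<close>[OF x] by simp
  qed
qed

lemma hwd_lin:
  assumes "has_weak_deriv y g" "has_weak_deriv z k"
  shows "has_weak_deriv (\<lambda>x. a * y x + b * z x) (\<lambda>t. a * g t + b * k t)"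
proof -
  have g: "set_integrable lborel {0..pi} g" and k: "set_integrable lborel {0..pi} k"
    using hwdD(1)[OF assms(1)] hwdD(1)[OF assms(2)] by blast+
  have ag: "set_integrable lborel {0..pi} (\<lambda>t. a * g t)" using g by (rule set_integrable_mult_right)
  have bk: "set_integrable lborel {0..pi} (\<lambda>t. b * k t)" using k by (rule set_integrable_mult_right)
  have "set_integrable lborel {0..pi} (\<lambda>t. a * g t + b * k t)" by (rule set_integral_add(1)[OF ag bk])
  moreover have "LI (\<lambda>t. a * g t + b * k t) x = a * LI g x + b * LI k x" if "x \<in> {0..pi}" for x
  proof -
    have agx: "set_integrable lborel {0..x} (\<lambda>t. a * g t)" using SI_sub[OF ag order_refl] that by auto
    have bkx: "set_integrable lborel {0..x} (\<lambda>t. b * k t)" using SI_sub[OF bk order_refl] that by auto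
    show ?thesis using set_integral_add(2)[OF agx bkx] by (simp add: set_integral_mult_right)
  qed
  ultimately show ?thesis
  proof (intro hwdI)
    fix x assume x: "x \<in> {0..pi}"
    have "y x = y 0 + LI g x" "z x = z 0 + LI k x" using bspec[OF hwdD(2)[OF assms(1)] x] bspec[OF hwdD(2)[OF assms(2)] x] by blast+
    then show "a * y x + b * z x = (a * y 0 + b * z 0) + LI (\<lambda>t. a * g t + b * k t) x"
      using \<open>\<And>x. x \<in> {0..pi} \<Longrightarrow> LI (\<lambda>t. a * g t + b * k t) x = a * LI g x + b * LI k x\<close>[OF x]
      by (simp add: algebra_simps)
  qed
qed


lemma sol_lin:
  assumes "sol_sys C Q f y u" "sol_sys C Q h y' u'"
  shows "sol_sys C Q (\<lambda>t. a * f t + b * h t) (\<lambda>x. a * y x + b * y' x) (\<lambda>x. a * u x + b * u' x)"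
proof -
  from assms have 1: "has_weak_deriv (\<lambda>x. a * y x + b * y' x) (\<lambda>t. a * (Q t * y t + u t) + b * (Q t * y' t + u' t))"
    by (intro hwd_lin) (auto simp: sol_sys_def)
  from assms have 2: "has_weak_deriv (\<lambda>x. a * u x + b * u' x) (\<lambda>t. a * ((C - (Q t)^2) * y t - Q t * u t + f t) + b * ((C - (Q t)^2) * y' t - Q t * u' t + h t))"
    by (intro hwd_lin) (auto simp: sol_sys_def)
  show ?thesis unfolding sol_sys_def
    by (intro conjI hwd_cong[OF 1] hwd_cong[OF 2]) (auto simp: algebra_simps)
qed


lemma wr:
  assumes s1: "sol_sys C Q (\<lambda>_. 0) a b" and s2: "sol_sys C Q (\<lambda>_. 0) c d"
  shows "\<forall>x\<in>{0..pi}. a x * d x - c x * b x = a 0 * d 0 - c 0 * b 0"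
proof -
  let ?a' = "\<lambda>t. Q t * a t + b t" and ?b' = "\<lambda>t. (C - (Q t)^2) * a t - Q t * b t + 0"
  let ?c' = "\<lambda>t. Q t * c t + d t" and ?d' = "\<lambda>t. (C - (Q t)^2) * c t - Q t * d t + 0"
  note A = hwdD[OF conjunct1[OF s1[unfolded sol_sys_def]]]
  note B = hwdD[OF conjunct2[OF s1[unfolded sol_sys_def]]]
  note Cc = hwdD[OF conjunct1[OF s2[unfolded sol_sys_def]]]
  note D = hwdD[OF conjunct2[OF s2[unfolded sol_sys_def]]]
  note p1 = prod_rule[OF A(1) D(1) A(2) D(2)]
  note p2 = prod_rule[OF Cc(1) B(1) Cc(2) B(2)]
  show ?thesis
  proof
    fix x assume x: "x \<in> {0..pi}"
    have p1x: "set_integrable lborel {0..x} (\<lambda>t. ?a' t * d t + a t * ?d' t)"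
      using SI_sub[OF p1(1) order_refl] x by auto
    have p2x: "set_integrable lborel {0..x} (\<lambda>t. ?c' t * b t + c t * ?b' t)"
      using SI_sub[OF p2(1) order_refl] x by auto
    have "a x * d x - c x * b x = a 0 * d 0 - c 0 * b 0 +
       (LI (\<lambda>t. ?a' t * d t + a t * ?d' t) x - LI (\<lambda>t. ?c' t * b t + c t * ?b' t) x)"
      using bspec[OF p1(2) x] bspec[OF p2(2) x] by simp
    also have "LI (\<lambda>t. ?a' t * d t + a t * ?d' t) x - LI (\<lambda>t. ?c' t * b t + c t * ?b' t) x
        = LI (\<lambda>t. (?a' t * d t + a t * ?d' t) - (?c' t * b t + c t * ?b' t)) x"
      by (rule set_integral_diff(2)[OF p1x p2x, symmetric])
    also have "\<dots> = LI (\<lambda>t. 0) x"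
      by (rule set_lebesgue_integral_cong) (auto simp: algebra_simps)
    finally show "a x * d x - c x * b x = a 0 * d 0 - c 0 * b 0" by (simp add: set_lebesgue_integral_def)
  qed
qed


lemma hwd_diff:
  assumes "has_weak_deriv y g" "has_weak_deriv z k"
  shows "has_weak_deriv (\<lambda>x. y x - z x) (\<lambda>t. g t - k t)"
  using hwd_lin[OF assms, of 1 "-1"] by simp

lemma hwd_const_mult:
  assumes "has_weak_deriv y g"
  shows "has_weak_deriv (\<lambda>x. a * y x) (\<lambda>t. a * g t)"
  using hwd_lin[OF assms assms, of a 0] by simp

lemma ualg:
  fixes d e y1 u1 y2 u2 e0 :: complex
  assumes w: "y1*u2 - y2*u1 = 1" and e1: "d*u1 - y1*e = - e0" and e2: "d*u2 - y2*e = 0"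
  shows "d = e0*y2" "e = e0*u2"
proof -
  have "d = d*(y1*u2 - y2*u1)" by (simp add: w)
  also have "\<dots> = y1*(d*u2 - y2*e) - y2*(d*u1 - y1*e)" by (simp add: algebra_simps)
  finally show "d = e0*y2" by (simp add: e1 e2)
  have "e = e*(y1*u2 - y2*u1)" by (simp add: w)
  also have "\<dots> = u1*(d*u2 - y2*e) - u2*(d*u1 - y1*e)" by (simp add: algebra_simps)
  finally show "e = e0*u2" by (simp add: e1 e2)
qed

lemma uniq:
  assumes s1: "sol_sys C Q (\<lambda>_. 0) y1 u1" and i1: "y1 0 = 1" "u1 0 = 0"
    and s2: "sol_sys C Q (\<lambda>_. 0) y2 u2" and i2: "y2 0 = 0" "u2 0 = 1"
    and W: "\<forall>x\<in>{0..pi}. y1 x * u2 x - y2 x * u1 x = 1"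
    and y2pi: "y2 pi \<noteq> 0"
    and h: "sol_sys C Q (\<lambda>_. 0) d e" "d 0 = 0" "d pi = 0"
  shows "\<forall>x\<in>{0..pi}. d x = 0 \<and> e x = 0"
proof -
  have de: "d x = e 0 * y2 x \<and> e x = e 0 * u2 x" if x: "x \<in> {0..pi}" for x
  proof -
    have E1: "d x * u1 x - y1 x * e x = d 0 * u1 0 - y1 0 * e 0" by (rule bspec[OF wr[OF h(1) s1] x])
    have E2: "d x * u2 x - y2 x * e x = d 0 * u2 0 - y2 0 * e 0" by (rule bspec[OF wr[OF h(1) s2] x])
    have e1: "d x * u1 x - y1 x * e x = - e 0" unfolding E1 i1 h(2) by simp
    have e2: "d x * u2 x - y2 x * e x = 0" unfolding E2 i2 h(2) by simp
    note u = ualg[OF bspec[OF W x] e1 e2]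
    show ?thesis using u by blast
  qed
  have pi: "pi \<in> {0..pi}" by simp
  have "d pi = e 0 * y2 pi" using de[OF pi] by blast
  then have "e 0 * y2 pi = 0" using h(3) by simp
  then have e0: "e 0 = 0" using y2pi by simp
  show ?thesis
  proof
    fix x assume x: "x \<in> {0..pi}"
    have "d x = e 0 * y2 x" "e x = e 0 * u2 x" using de[OF x] by blast+
    then show "d x = 0 \<and> e x = 0" unfolding e0 by simp
  qed
qed

lemma alg2:
  fixes C Q y1 u1 y2 u2 I1 I2 f :: complex
  shows "((C - Q^2) * y2 - Q * u2 + 0) * I1 + u2 * (y1 * f) - (((C - Q^2) * y1 - Q * u1 + 0) * I2 + u1 * (y2 * f))
         = (C - Q^2) * (y2 * I1 - y1 * I2) - Q * (u2 * I1 - u1 * I2) + (y1 * u2 - y2 * u1) * f"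
  by (simp add: algebra_simps)

lemma alg2':
  fixes C Q y1 u1 y2 u2 I1 I2 f :: complex
  assumes "y1 * u2 - y2 * u1 = 1"
  shows "((C - Q^2) * y2 - Q * u2 + 0) * I1 + u2 * (y1 * f) - (((C - Q^2) * y1 - Q * u1 + 0) * I2 + u1 * (y2 * f))
         = (C - Q^2) * (y2 * I1 - y1 * I2) - Q * (u2 * I1 - u1 * I2) + f"
  by (simp only: alg2 assms mult_1_left)

lemma exist:
  assumes s1: "sol_sys C Q (\<lambda>_. 0) y1 u1" and i1: "y1 0 = 1" "u1 0 = 0"
    and s2: "sol_sys C Q (\<lambda>_. 0) y2 u2" and i2: "y2 0 = 0" "u2 0 = 1"
    and W: "\<forall>x\<in>{0..pi}. y1 x * u2 x - y2 x * u1 x = 1"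
    and f: "set_integrable lborel {0..pi} f"
  shows "sol_sys C Q f (\<lambda>x. y2 x * LI (\<lambda>t. y1 t * f t) x - y1 x * LI (\<lambda>t. y2 t * f t) x)
                       (\<lambda>x. u2 x * LI (\<lambda>t. y1 t * f t) x - u1 x * LI (\<lambda>t. y2 t * f t) x)"
proof -
  let ?I1 = "LI (\<lambda>t. y1 t * f t)" and ?I2 = "LI (\<lambda>t. y2 t * f t)"
  let ?a1 = "\<lambda>t. Q t * y1 t + u1 t" and ?b1 = "\<lambda>t. (C - (Q t)^2) * y1 t - Q t * u1 t + 0"
  let ?a2 = "\<lambda>t. Q t * y2 t + u2 t" and ?b2 = "\<lambda>t. (C - (Q t)^2) * y2 t - Q t * u2 t + 0"
  note A1 = hwdD[OF conjunct1[OF s1[unfolded sol_sys_def]]]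
  note B1 = hwdD[OF conjunct2[OF s1[unfolded sol_sys_def]]]
  note A2 = hwdD[OF conjunct1[OF s2[unfolded sol_sys_def]]]
  note B2 = hwdD[OF conjunct2[OF s2[unfolded sol_sys_def]]]
  have y1f: "set_integrable lborel {0..pi} (\<lambda>t. y1 t * f t)"
    by (rule cont_mult_int[OF AC_cont[OF A1] f])
  have y2f: "set_integrable lborel {0..pi} (\<lambda>t. y2 t * f t)"
    by (rule cont_mult_int[OF AC_cont[OF A2] f])
  have I1: "\<forall>x\<in>{0..pi}. ?I1 x = ?I1 0 + LI (\<lambda>t. y1 t * f t) x" unfolding LI_zero by simp
  have I2: "\<forall>x\<in>{0..pi}. ?I2 x = ?I2 0 + LI (\<lambda>t. y2 t * f t) x" unfolding LI_zero by simp
  have hp: "has_weak_deriv (\<lambda>x. F x * G x) P"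
    if "set_integrable lborel {0..pi} P" "\<forall>x\<in>{0..pi}. F x * G x = F 0 * G 0 + LI P x" for F G P
    by (rule hwdI[OF that(1)]) (rule bspec[OF that(2)])
  have d1: "has_weak_deriv (\<lambda>x. y2 x * ?I1 x) (\<lambda>t. ?a2 t * ?I1 t + y2 t * (y1 t * f t))"
    by (rule hp) (rule prod_rule[OF A2(1) y1f A2(2) I1])+
  have d2: "has_weak_deriv (\<lambda>x. y1 x * ?I2 x) (\<lambda>t. ?a1 t * ?I2 t + y1 t * (y2 t * f t))"
    by (rule hp) (rule prod_rule[OF A1(1) y2f A1(2) I2])+
  have d3: "has_weak_deriv (\<lambda>x. u2 x * ?I1 x) (\<lambda>t. ?b2 t * ?I1 t + u2 t * (y1 t * f t))"
    by (rule hp) (rule prod_rule[OF B2(1) y1f B2(2) I1])+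
  have d4: "has_weak_deriv (\<lambda>x. u1 x * ?I2 x) (\<lambda>t. ?b1 t * ?I2 t + u1 t * (y2 t * f t))"
    by (rule hp) (rule prod_rule[OF B1(1) y2f B1(2) I2])+
  show ?thesis unfolding sol_sys_def
  proof
    show "has_weak_deriv (\<lambda>x. y2 x * ?I1 x - y1 x * ?I2 x)
      (\<lambda>t. Q t * (y2 t * ?I1 t - y1 t * ?I2 t) + (u2 t * ?I1 t - u1 t * ?I2 t))"
      by (rule hwd_cong[OF hwd_diff[OF d1 d2]]) (simp add: algebra_simps)
    show "has_weak_deriv (\<lambda>x. u2 x * ?I1 x - u1 x * ?I2 x)
      (\<lambda>t. (C - (Q t)^2) * (y2 t * ?I1 t - y1 t * ?I2 t) - Q t * (u2 t * ?I1 t - u1 t * ?I2 t) + f t)"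
      by (rule hwd_cong[OF hwd_diff[OF d3 d4]], rule alg2', rule bspec[OF W], assumption)
  qed
qed


lemma SI_nonneg:
  fixes f :: "'a \<Rightarrow> real"
  assumes "\<And>t. t \<in> A \<Longrightarrow> 0 \<le> f t"
  shows "0 \<le> set_lebesgue_integral M A f"
  unfolding set_lebesgue_integral_def
  by (rule Bochner_Integration.integral_nonneg) (use assms in \<open>auto simp: indicator_def\<close>)

lemma SI_subr:
  fixes g :: "real \<Rightarrow> real"
  assumes "set_integrable lborel {a..b} g" "a \<le> c" "d \<le> b"
  shows "set_integrable lborel {c..d} g"
  by (rule set_integrable_subset[OF assms(1)]) (use assms in auto)

lemma split_real:
  fixes h :: "real \<Rightarrow> real"
  assumes h: "set_integrable lborel {0..b} h" and s: "0 \<le> s" "s \<le> b"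
  shows "set_lebesgue_integral lborel {0..s} h + set_lebesgue_integral lborel {s..b} h = set_lebesgue_integral lborel {0..b} h"
proof -
  have hi: "h integrable_on {0..b}" using set_borel_integral_eq_integral(1)[OF h] .
  have "set_lebesgue_integral lborel {0..s} h = integral {0..s} h"
    using set_borel_integral_eq_integral(2)[OF SI_subr[OF h order_refl s(2)]] .
  moreover have "set_lebesgue_integral lborel {s..b} h = integral {s..b} h"
    using set_borel_integral_eq_integral(2)[OF SI_subr[OF h s(1) order_refl]] .
  moreover have "set_lebesgue_integral lborel {0..b} h = integral {0..b} h"
    using set_borel_integral_eq_integral(2)[OF h] .
  ultimately show ?thesis using Henstock_Kurzweil_Integration.integral_combine[OF s hi] by simp
qed

lemma sub_le:
  fixes h :: "real \<Rightarrow> real"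
  assumes h: "set_integrable lborel {0..b} h" and s: "0 \<le> s" "s \<le> b" and nn: "\<And>t. 0 \<le> h t"
  shows "set_lebesgue_integral lborel {0..s} h \<le> set_lebesgue_integral lborel {0..b} h"
proof -
  have "0 \<le> set_lebesgue_integral lborel {s..b} h" by (rule SI_nonneg) (use nn in auto)
  then show ?thesis using split_real[OF h s] by linarith
qed

lemma int_const:
  "set_lebesgue_integral lborel {0..b} (\<lambda>_. c::real) = c * b" if "0 \<le> b"
proof -
  have "set_integrable lborel {0..b} (\<lambda>_. c)" by (rule borel_integrable_atLeastAtMost') simp
  then have "set_lebesgue_integral lborel {0..b} (\<lambda>_. c) = integral {0..b} (\<lambda>_. c)"
    by (rule set_borel_integral_eq_integral(2))
  then show ?thesis using that by simp
qed

lemma CS: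
  fixes f :: "real \<Rightarrow> complex"
  assumes f: "L2_on {0..pi} f"
  shows "set_lebesgue_integral lborel {0..pi} (\<lambda>t. cmod (f t)) \<le> sqrt pi * L2_norm {0..pi} f"
proof -
  define A where "A = set_lebesgue_integral lborel {0..pi} (\<lambda>t. cmod (f t))"
  define N where "N = set_lebesgue_integral lborel {0..pi} (\<lambda>t. (cmod (f t))^2)"
  have fi: "set_integrable lborel {0..pi} f" by (rule L2_int[OF f])
  have ai: "set_integrable lborel {0..pi} (\<lambda>t. cmod (f t))"
    using fi by (simp add: set_integrable_norm)
  have si: "set_integrable lborel {0..pi} (\<lambda>t. (cmod (f t))^2)" using f by (simp add: L2_on_def)
  have A0: "0 \<le> A" unfolding A_def by (rule SI_nonneg) auto
  have N0: "0 \<le> N" unfolding N_def by (rule SI_nonneg) auto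
  define l where "l = A / pi"
  have c: "set_integrable lborel {0..pi} (\<lambda>_. l^2)" by (rule borel_integrable_atLeastAtMost') simp
  have "set_lebesgue_integral lborel {0..pi} (\<lambda>t. 2 * l * cmod (f t))
      \<le> set_lebesgue_integral lborel {0..pi} (\<lambda>t. l^2 + (cmod (f t))^2)"
  proof (rule set_integral_mono)
    show "set_integrable lborel {0..pi} (\<lambda>t. 2 * l * cmod (f t))" using ai by (rule set_integrable_mult_right)
    show "set_integrable lborel {0..pi} (\<lambda>t. l^2 + (cmod (f t))^2)" by (rule set_integral_add(1)[OF c si])
    show "2 * l * cmod (f t) \<le> l^2 + (cmod (f t))^2" for t
      using sum_squares_bound[of l "cmod (f t)"] by (simp add: power2_eq_square)
  qed
  also have "\<dots> = l^2 * pi + N"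
    using set_integral_add(2)[OF c si] int_const[of pi "l^2"] by (simp add: N_def)
  finally have "2 * l * A \<le> l^2 * pi + N"
    by (simp add: A_def set_integral_mult_right)
  then have "2 * A^2 / pi \<le> A^2 / pi + N" by (simp add: l_def power2_eq_square field_simps)
  then have "A^2 / pi \<le> N" by simp
  then have "A^2 \<le> pi * N" by (simp add: field_simps)
  then have "sqrt (A^2) \<le> sqrt (pi * N)" by (rule real_sqrt_le_mono)
  then show ?thesis using A0 by (simp add: A_def N_def L2_norm_def real_sqrt_mult)
qed



lemma sq_meas:
  fixes h :: "real \<Rightarrow> complex"
  assumes "set_borel_measurable lborel S h"
  shows "set_borel_measurable lborel S (\<lambda>t. (cmod (h t))^2)"
proof -
  have "(\<lambda>x. (cmod (indicator S x *\<^sub>R h x))^2) \<in> borel_measurable lborel"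
    using assms unfolding set_borel_measurable_def by measurable
  moreover have "(\<lambda>x. (cmod (indicator S x *\<^sub>R h x))^2) = (\<lambda>x. indicator S x *\<^sub>R (cmod (h x))^2)"
    by (auto simp: indicator_def)
  ultimately show ?thesis unfolding set_borel_measurable_def by simp
qed

lemma L2_cont:
  fixes F :: "real \<Rightarrow> complex"
  assumes "continuous_on {0..pi} F"
  shows "L2_on {0..pi} F"
  unfolding L2_on_def
proof
  show "set_borel_measurable lborel {0..pi} F" by (rule cont_meas[OF assms])
  show "set_integrable lborel {0..pi} (\<lambda>t. (cmod (F t))^2)"
    by (rule borel_integrable_atLeastAtMost') (intro continuous_intros assms)
qed

lemma L2_comb:
  fixes Q F G :: "real \<Rightarrow> complex"
  assumes Q: "L2_on {0..pi} Q" and F: "continuous_on {0..pi} F" and G: "continuous_on {0..pi} G"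
  shows "L2_on {0..pi} (\<lambda>t. Q t * F t + G t)"
proof -
  have Qm: "set_borel_measurable lborel {0..pi} Q" by (rule L2_meas[OF Q])
  have Fm: "set_borel_measurable lborel {0..pi} F" by (rule cont_meas[OF F])
  have Gm: "set_borel_measurable lborel {0..pi} G" by (rule cont_meas[OF G])
  have m: "set_borel_measurable lborel {0..pi} (\<lambda>t. Q t * F t + G t)"
  proof -
    have "(\<lambda>x. (indicator {0..pi} x *\<^sub>R Q x) * (indicator {0..pi} x *\<^sub>R F x) + indicator {0..pi} x *\<^sub>R G x) \<in> borel_measurable lborel"
      using Qm Fm Gm unfolding set_borel_measurable_def by measurable
    moreover have "(\<lambda>x. (indicator {0..pi} x *\<^sub>R Q x) * (indicator {0..pi} x *\<^sub>R F x) + indicator {0..pi} x *\<^sub>R G x)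
        = (\<lambda>x. indicator {0..pi} x *\<^sub>R (Q x * F x + G x))"
      by (auto simp: indicator_def)
    ultimately show ?thesis unfolding set_borel_measurable_def by simp
  qed
  obtain M1 where M1: "M1 > 0" "\<And>x. x \<in> {0..pi} \<Longrightarrow> norm (F x) \<le> M1" using cont_bound[OF F] by blast
  obtain M2 where M2: "M2 > 0" "\<And>x. x \<in> {0..pi} \<Longrightarrow> norm (G x) \<le> M2" using cont_bound[OF G] by blast
  have sq: "set_integrable lborel {0..pi} (\<lambda>t. (cmod (Q t))^2)" using Q by (simp add: L2_on_def)
  have c: "set_integrable lborel {0..pi} (\<lambda>t. 2 * M2^2)" by (rule borel_integrable_atLeastAtMost') simp
  have B: "set_integrable lborel {0..pi} (\<lambda>t. 2 * M1^2 * (cmod (Q t))^2 + 2 * M2^2)"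
    by (rule set_integral_add(1)[OF set_integrable_mult_right[OF sq] c])
  have bd: "norm ((cmod (Q t * F t + G t))^2) \<le> norm (2 * M1^2 * (cmod (Q t))^2 + 2 * M2^2)" if t: "t \<in> {0..pi}" for t
  proof -
    have "cmod (Q t * F t + G t) \<le> cmod (Q t) * M1 + M2"
      using norm_triangle_ineq[of "Q t * F t" "G t"] M1(2)[OF t] M2(2)[OF t]
      by (smt (verit) mult_left_mono norm_ge_zero norm_mult)
    then have "(cmod (Q t * F t + G t))^2 \<le> (cmod (Q t) * M1 + M2)^2"
      by (rule power_mono) simp
    also have "\<dots> \<le> 2 * M1^2 * (cmod (Q t))^2 + 2 * M2^2"
      using sum_squares_bound[of "cmod (Q t) * M1" M2] by (simp add: power2_eq_square algebra_simps)
    finally show ?thesis by simp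
  qed
  have "set_integrable lborel {0..pi} (\<lambda>t. (cmod (Q t * F t + G t))^2)"
    by (rule set_integrable_bound[OF B sq_meas[OF m]]) (rule AE_I2, use bd in auto)
  then show ?thesis using m by (simp add: L2_on_def)
qed

lemma LI_lin:
  fixes F G :: "real \<Rightarrow> complex"
  assumes "set_integrable lborel {0..x} F" "set_integrable lborel {0..x} G"
  shows "LI (\<lambda>t. a * F t + b * G t) x = a * LI F x + b * LI G x"
proof -
  have "set_integrable lborel {0..x} (\<lambda>t. a * F t)" "set_integrable lborel {0..x} (\<lambda>t. b * G t)"
    using assms by (auto intro: set_integrable_mult_right)
  from set_integral_add(2)[OF this] show ?thesis by (simp add: set_integral_mult_right)
qed

lemma LI_bound:
  fixes F h :: "real \<Rightarrow> complex"
  assumes h: "set_integrable lborel {0..pi} h" and F: "continuous_on {0..pi} F"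
    and M: "\<And>t. t \<in> {0..pi} \<Longrightarrow> cmod (F t) \<le> M" and x: "x \<in> {0..pi}"
  shows "cmod (LI (\<lambda>t. F t * h t) x) \<le> M * set_lebesgue_integral lborel {0..pi} (\<lambda>t. cmod (h t))"
proof -
  have Fh: "set_integrable lborel {0..pi} (\<lambda>t. F t * h t)" by (rule cont_mult_int[OF F h])
  have Fhx: "set_integrable lborel {0..x} (\<lambda>t. F t * h t)" using SI_sub[OF Fh order_refl] x by auto
  have hn: "set_integrable lborel {0..pi} (\<lambda>t. cmod (h t))" using h by (simp add: set_integrable_norm)
  have hnx: "set_integrable lborel {0..x} (\<lambda>t. cmod (h t))" using SI_subr[OF hn order_refl] x by auto
  have "cmod (LI (\<lambda>t. F t * h t) x) \<le> set_lebesgue_integral lborel {0..x} (\<lambda>t. cmod (F t * h t))"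
    by (rule set_integral_norm_bound[OF Fhx])
  also have "\<dots> \<le> set_lebesgue_integral lborel {0..x} (\<lambda>t. M * cmod (h t))"
  proof (rule set_integral_mono)
    show "set_integrable lborel {0..x} (\<lambda>t. cmod (F t * h t))" using Fhx by (simp add: set_integrable_norm)
    show "set_integrable lborel {0..x} (\<lambda>t. M * cmod (h t))" using hnx by (rule set_integrable_mult_right)
    fix t assume t: "t \<in> {0..x}"
    then have "t \<in> {0..pi}" using x by auto
    then show "cmod (F t * h t) \<le> M * cmod (h t)" using M by (simp add: norm_mult mult_right_mono)
  qed
  also have "\<dots> = M * set_lebesgue_integral lborel {0..x} (\<lambda>t. cmod (h t))"
    by (rule set_integral_mult_right)
  also have "\<dots> \<le> M * set_lebesgue_integral lborel {0..pi} (\<lambda>t. cmod (h t))"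
  proof (rule mult_left_mono)
    show "set_lebesgue_integral lborel {0..x} (\<lambda>t. cmod (h t)) \<le> set_lebesgue_integral lborel {0..pi} (\<lambda>t. cmod (h t))"
      by (rule sub_le[OF hn]) (use x in auto)
    show "0 \<le> M" using M[of 0] by (smt (verit) norm_ge_zero pi_ge_zero atLeastAtMost_iff)
  qed
  finally show ?thesis .
qed

lemma L2N_sq:
  assumes "L2_on {0..pi} h"
  shows "(L2_norm {0..pi} h)^2 = set_lebesgue_integral lborel {0..pi} (\<lambda>t. (cmod (h t))^2)"
proof -
  have "0 \<le> set_lebesgue_integral lborel {0..pi} (\<lambda>t. (cmod (h t))^2)" by (rule SI_nonneg) simp
  then show ?thesis by (simp add: L2_norm_def)
qed

lemma L2N_pt:
  fixes h :: "real \<Rightarrow> complex"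
  assumes h: "L2_on {0..pi} h" and S: "\<And>t. t \<in> {0..pi} \<Longrightarrow> cmod (h t) \<le> S"
  shows "(L2_norm {0..pi} h)^2 \<le> pi * S^2"
proof -
  have sq: "set_integrable lborel {0..pi} (\<lambda>t. (cmod (h t))^2)" using h by (simp add: L2_on_def)
  have c: "set_integrable lborel {0..pi} (\<lambda>t. S^2)" by (rule borel_integrable_atLeastAtMost') simp
  have "(L2_norm {0..pi} h)^2 = set_lebesgue_integral lborel {0..pi} (\<lambda>t. (cmod (h t))^2)" by (rule L2N_sq[OF h])
  also have "\<dots> \<le> set_lebesgue_integral lborel {0..pi} (\<lambda>t. S^2)"
    by (rule set_integral_mono[OF sq c]) (use S in \<open>auto intro: power_mono\<close>)
  also have "\<dots> = pi * S^2" using int_const[of pi "S^2"] by simp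
  finally show ?thesis .
qed

lemma L2N_comb:
  fixes Q F G :: "real \<Rightarrow> complex"
  assumes Q: "L2_on {0..pi} Q" and F: "continuous_on {0..pi} F" and G: "continuous_on {0..pi} G"
    and SF: "\<And>t. t \<in> {0..pi} \<Longrightarrow> cmod (F t) \<le> S" and SG: "\<And>t. t \<in> {0..pi} \<Longrightarrow> cmod (G t) \<le> S"
  shows "(L2_norm {0..pi} (\<lambda>t. Q t * F t + G t))^2 \<le> 2 * S^2 * set_lebesgue_integral lborel {0..pi} (\<lambda>t. (cmod (Q t))^2) + 2 * pi * S^2"
proof -
  have h: "L2_on {0..pi} (\<lambda>t. Q t * F t + G t)" by (rule L2_comb[OF Q F G])
  have sq: "set_integrable lborel {0..pi} (\<lambda>t. (cmod (Q t * F t + G t))^2)" using h by (simp add: L2_on_def)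
  have sqQ: "set_integrable lborel {0..pi} (\<lambda>t. (cmod (Q t))^2)" using Q by (simp add: L2_on_def)
  have c: "set_integrable lborel {0..pi} (\<lambda>t. 2 * S^2)" by (rule borel_integrable_atLeastAtMost') simp
  have B: "set_integrable lborel {0..pi} (\<lambda>t. 2 * S^2 * (cmod (Q t))^2 + 2 * S^2)"
    by (rule set_integral_add(1)[OF set_integrable_mult_right[OF sqQ] c])
  have "(L2_norm {0..pi} (\<lambda>t. Q t * F t + G t))^2 = set_lebesgue_integral lborel {0..pi} (\<lambda>t. (cmod (Q t * F t + G t))^2)"
    by (rule L2N_sq[OF h])
  also have "\<dots> \<le> set_lebesgue_integral lborel {0..pi} (\<lambda>t. 2 * S^2 * (cmod (Q t))^2 + 2 * S^2)"
  proof (rule set_integral_mono[OF sq B])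
    fix t assume t: "t \<in> {0..pi}"
    have S0: "0 \<le> S" using SF[OF t] norm_ge_zero[of "F t"] by linarith
    have "cmod (Q t * F t + G t) \<le> cmod (Q t) * S + S"
      using norm_triangle_ineq[of "Q t * F t" "G t"] SF[OF t] SG[OF t]
      by (smt (verit) mult_left_mono norm_ge_zero norm_mult)
    then have "(cmod (Q t * F t + G t))^2 \<le> (cmod (Q t) * S + S)^2"
      by (rule power_mono) simp
    also have "\<dots> \<le> 2 * S^2 * (cmod (Q t))^2 + 2 * S^2"
      using sum_squares_bound[of "cmod (Q t) * S" S] by (simp add: power2_eq_square algebra_simps)
    finally show "(cmod (Q t * F t + G t))^2 \<le> 2 * S^2 * (cmod (Q t))^2 + 2 * S^2" .
  qed
  also have "\<dots> = 2 * S^2 * set_lebesgue_integral lborel {0..pi} (\<lambda>t. (cmod (Q t))^2) + 2 * pi * S^2"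
    using set_integral_add(2)[OF set_integrable_mult_right[OF sqQ] c] int_const[of pi "2 * S^2"]
    by (simp add: set_integral_mult_right)
  finally show ?thesis .
qed



lemma comb_bd:
  fixes a b c d :: complex
  assumes "cmod a \<le> M" "cmod b \<le> M" "cmod c \<le> N" "cmod d \<le> N"
  shows "cmod (a * c - b * d) \<le> 2 * M * N"
proof -
  have "cmod (a * c - b * d) \<le> cmod a * cmod c + cmod b * cmod d"
    using norm_triangle_ineq4[of "a*c" "b*d"] by (simp add: norm_mult)
  also have "\<dots> \<le> M * N + M * N"
    using assms by (intro add_mono mult_mono) (auto intro: order_trans[OF norm_ge_zero])
  finally show ?thesis by simp
qed

lemma add_bd:
  fixes p q r :: complex
  assumes "cmod p \<le> P" "cmod q \<le> B" "cmod r \<le> M"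
  shows "cmod (p + q * r) \<le> P + B * M"
proof -
  have "cmod (p + q * r) \<le> cmod p + cmod q * cmod r"
    using norm_triangle_ineq[of p "q*r"] by (simp add: norm_mult)
  also have "\<dots> \<le> P + B * M"
    using assms by (intro add_mono mult_mono) (auto intro: order_trans[OF norm_ge_zero])
  finally show ?thesis .
qed

theorem lemma5:
  fixes C :: complex and Q y1 u1 y2 u2 :: "real \<Rightarrow> complex"
  assumes Q_loc: "L2_loc Q"
    and Q_per: "\<forall>x. Q (x + pi) = Q x"
    and Q_mean: "set_lebesgue_integral lborel {0..pi} Q / pi = 0"
    and sol1: "sol_sys C Q (\<lambda>_. 0) y1 u1" and init1: "y1 0 = 1" "u1 0 = 0"
    and sol2: "sol_sys C Q (\<lambda>_. 0) y2 u2" and init2: "y2 0 = 0" "u2 0 = 1"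
    and y2pi: "y2 pi \<noteq> 0"
  shows "\<exists>R1 R2 :: (real \<Rightarrow> complex) \<Rightarrow> (real \<Rightarrow> complex).
     (\<forall>f. L2_on {0..pi} f \<longrightarrow>
        sol_sys C Q f (R1 f) (R2 f) \<and> R1 f 0 = 0 \<and> R1 f pi = 0 \<and>
        (\<forall>y u. sol_sys C Q f y u \<and> y 0 = 0 \<and> y pi = 0 \<longrightarrow>
           (\<forall>x\<in>{0..pi}. y x = R1 f x \<and> u x = R2 f x))) \<and>
     (\<forall>f g (a::complex) (b::complex). L2_on {0..pi} f \<longrightarrow> L2_on {0..pi} g \<longrightarrow>
        (\<forall>x\<in>{0..pi}. R1 (\<lambda>t. a * f t + b * g t) x = a * R1 f x + b * R1 g x \<and>
                       R2 (\<lambda>t. a * f t + b * g t) x = a * R2 f x + b * R2 g x)) \<and>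
     (\<forall>f. L2_on {0..pi} f \<longrightarrow> H1 (R1 f) \<and> L2_on {0..pi} (R2 f) \<and> W11 (R2 f)) \<and>
     (\<exists>K. \<forall>f. L2_on {0..pi} f \<longrightarrow>
        (\<exists>g. L2_on {0..pi} g \<and> has_weak_deriv (R1 f) g \<and>
             sqrt ((L2_norm {0..pi} (R1 f))^2 + (L2_norm {0..pi} g)^2) \<le> K * L2_norm {0..pi} f)) \<and>
     (\<exists>K. \<forall>f. L2_on {0..pi} f \<longrightarrow> L2_norm {0..pi} (R2 f) \<le> K * L2_norm {0..pi} f)"
proof -
  have QL: "L2_on {0..pi} Q" using Q_loc by (simp add: L2_loc_def)
  note A1 = hwdD[OF conjunct1[OF sol1[unfolded sol_sys_def]]]
  note B1 = hwdD[OF conjunct2[OF sol1[unfolded sol_sys_def]]]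
  note A2 = hwdD[OF conjunct1[OF sol2[unfolded sol_sys_def]]]
  note B2 = hwdD[OF conjunct2[OF sol2[unfolded sol_sys_def]]]
  have cy1: "continuous_on {0..pi} y1" by (rule AC_cont[OF A1])
  have cu1: "continuous_on {0..pi} u1" by (rule AC_cont[OF B1])
  have cy2: "continuous_on {0..pi} y2" by (rule AC_cont[OF A2])
  have cu2: "continuous_on {0..pi} u2" by (rule AC_cont[OF B2])
  have W: "\<forall>x\<in>{0..pi}. y1 x * u2 x - y2 x * u1 x = 1"
  proof
    fix x assume x: "x \<in> {0..pi}"
    have "y1 x * u2 x - y2 x * u1 x = y1 0 * u2 0 - y2 0 * u1 0" by (rule bspec[OF wr[OF sol1 sol2] x])
    then show "y1 x * u2 x - y2 x * u1 x = 1" unfolding init1 init2 by simp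
  qed
  define I1 where "I1 = (\<lambda>f x. LI (\<lambda>t. y1 t * f t) x)"
  define I2 where "I2 = (\<lambda>f x. LI (\<lambda>t. y2 t * f t) x)"
  define YP where "YP = (\<lambda>f x. y2 x * I1 f x - y1 x * I2 f x)"
  define UP where "UP = (\<lambda>f x. u2 x * I1 f x - u1 x * I2 f x)"
  define cc where "cc = (\<lambda>f. - YP f pi / y2 pi)"
  define R1 where "R1 = (\<lambda>f x. YP f x + cc f * y2 x)"
  define R2 where "R2 = (\<lambda>f x. UP f x + cc f * u2 x)"
  have solR: "sol_sys C Q f (R1 f) (R2 f)" if f: "L2_on {0..pi} f" for f
  proof -
    have fi: "set_integrable lborel {0..pi} f" by (rule L2_int[OF f])
    have "sol_sys C Q f (YP f) (UP f)"
      unfolding YP_def UP_def I1_def I2_def by (rule exist[OF sol1 init1 sol2 init2 W fi])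
    from sol_lin[OF this sol2, of 1 "cc f"] show ?thesis by (simp add: R1_def R2_def)
  qed
  have R10: "R1 f 0 = 0" for f
    unfolding R1_def YP_def I1_def I2_def LI_zero init2 by simp
  have R1pi: "R1 f pi = 0" for f
    unfolding R1_def cc_def using y2pi by simp
  have uniqR: "\<forall>x\<in>{0..pi}. y x = R1 f x \<and> u x = R2 f x"
    if f: "L2_on {0..pi} f" and s: "sol_sys C Q f y u" "y 0 = 0" "y pi = 0" for f y u
  proof -
    have "sol_sys C Q (\<lambda>t. 1 * f t + (-1) * f t) (\<lambda>x. 1 * y x + (-1) * R1 f x) (\<lambda>x. 1 * u x + (-1) * R2 f x)"
      by (rule sol_lin[OF s(1) solR[OF f]])
    then have h: "sol_sys C Q (\<lambda>_. 0) (\<lambda>x. y x - R1 f x) (\<lambda>x. u x - R2 f x)" by simp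
    have "\<forall>x\<in>{0..pi}. y x - R1 f x = 0 \<and> u x - R2 f x = 0"
      by (rule uniq[OF sol1 init1 sol2 init2 W y2pi h]) (simp_all add: s R10 R1pi)
    then show ?thesis by simp
  qed
  have I_lin: "I1 (\<lambda>t. a * f t + b * g t) x = a * I1 f x + b * I1 g x \<and>
               I2 (\<lambda>t. a * f t + b * g t) x = a * I2 f x + b * I2 g x"
    if f: "L2_on {0..pi} f" and g: "L2_on {0..pi} g" and x: "x \<in> {0..pi}" for f g a b x
  proof -
    have fi: "set_integrable lborel {0..pi} f" by (rule L2_int[OF f])
    have gi: "set_integrable lborel {0..pi} g" by (rule L2_int[OF g])
    have sub: "set_integrable lborel {0..x} h" if "set_integrable lborel {0..pi} h" for h :: "real \<Rightarrow> complex"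
      using SI_sub[OF that order_refl] x by auto
    have "I1 (\<lambda>t. a * f t + b * g t) x = LI (\<lambda>t. a * (y1 t * f t) + b * (y1 t * g t)) x"
      unfolding I1_def by (rule LI_cong) (simp add: algebra_simps)
    also have "\<dots> = a * I1 f x + b * I1 g x"
      unfolding I1_def by (rule LI_lin[OF sub[OF cont_mult_int[OF cy1 fi]] sub[OF cont_mult_int[OF cy1 gi]]])
    finally have 1: "I1 (\<lambda>t. a * f t + b * g t) x = a * I1 f x + b * I1 g x" .
    have "I2 (\<lambda>t. a * f t + b * g t) x = LI (\<lambda>t. a * (y2 t * f t) + b * (y2 t * g t)) x"
      unfolding I2_def by (rule LI_cong) (simp add: algebra_simps)
    also have "\<dots> = a * I2 f x + b * I2 g x"
      unfolding I2_def by (rule LI_lin[OF sub[OF cont_mult_int[OF cy2 fi]] sub[OF cont_mult_int[OF cy2 gi]]])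
    finally show ?thesis using 1 by simp
  qed
  have YP_lin: "YP (\<lambda>t. a * f t + b * g t) x = a * YP f x + b * YP g x \<and>
               UP (\<lambda>t. a * f t + b * g t) x = a * UP f x + b * UP g x"
    if f: "L2_on {0..pi} f" and g: "L2_on {0..pi} g" and x: "x \<in> {0..pi}" for f g a b x
    using I_lin[OF f g x, of a b] unfolding YP_def UP_def by (simp add: algebra_simps)
  have cc_lin: "cc (\<lambda>t. a * f t + b * g t) = a * cc f + b * cc g"
    if f: "L2_on {0..pi} f" and g: "L2_on {0..pi} g" for f g a b
  proof -
    have "YP (\<lambda>t. a * f t + b * g t) pi = a * YP f pi + b * YP g pi" using YP_lin[OF f g, of pi a b] by simp
    then show ?thesis unfolding cc_def using y2pi by (simp add: field_simps)
  qed
  have lin: "\<forall>x\<in>{0..pi}. R1 (\<lambda>t. a * f t + b * g t) x = a * R1 f x + b * R1 g x \<and>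
                       R2 (\<lambda>t. a * f t + b * g t) x = a * R2 f x + b * R2 g x"
    if f: "L2_on {0..pi} f" and g: "L2_on {0..pi} g" for f g a b
  proof
    fix x assume x: "x \<in> {0..pi}"
    show "R1 (\<lambda>t. a * f t + b * g t) x = a * R1 f x + b * R1 g x \<and>
          R2 (\<lambda>t. a * f t + b * g t) x = a * R2 f x + b * R2 g x"
      using YP_lin[OF f g x, of a b] cc_lin[OF f g, of a b] unfolding R1_def R2_def
      by (simp add: algebra_simps)
  qed
  have contR: "continuous_on {0..pi} (R1 f) \<and> continuous_on {0..pi} (R2 f)" if f: "L2_on {0..pi} f" for f
  proof -
    note s = solR[OF f, unfolded sol_sys_def]
    show ?thesis using AC_cont[OF hwdD[OF conjunct1[OF s]]] AC_cont[OF hwdD[OF conjunct2[OF s]]] by simp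
  qed
  have reg: "H1 (R1 f) \<and> L2_on {0..pi} (R2 f) \<and> W11 (R2 f)" if f: "L2_on {0..pi} f" for f
  proof -
    note s = solR[OF f, unfolded sol_sys_def]
    have "L2_on {0..pi} (\<lambda>t. Q t * R1 f t + R2 f t)"
      by (rule L2_comb[OF QL]) (use contR[OF f] in auto)
    then have "H1 (R1 f)" using conjunct1[OF s] unfolding H1_def by blast
    moreover have "L2_on {0..pi} (R2 f)" by (rule L2_cont) (use contR[OF f] in auto)
    moreover have "W11 (R2 f)" using conjunct2[OF s] unfolding W11_def has_weak_deriv_def by blast
    ultimately show ?thesis by blast
  qed
  obtain M1 where M1: "\<And>x. x \<in> {0..pi} \<Longrightarrow> cmod (y1 x) \<le> M1" using cont_bound[OF cy1] by blast
  obtain M2 where M2: "\<And>x. x \<in> {0..pi} \<Longrightarrow> cmod (u1 x) \<le> M2" using cont_bound[OF cu1] by blast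
  obtain M3 where M3: "\<And>x. x \<in> {0..pi} \<Longrightarrow> cmod (y2 x) \<le> M3" using cont_bound[OF cy2] by blast
  obtain M4 where M4: "\<And>x. x \<in> {0..pi} \<Longrightarrow> cmod (u2 x) \<le> M4" using cont_bound[OF cu2] by blast
  define M where "M = max (max M1 M2) (max M3 M4)"
  have My1: "cmod (y1 x) \<le> M" and Mu1: "cmod (u1 x) \<le> M" and My2: "cmod (y2 x) \<le> M" and Mu2: "cmod (u2 x) \<le> M"
    if "x \<in> {0..pi}" for x
    using M1[OF that] M2[OF that] M3[OF that] M4[OF that] unfolding M_def by linarith+
  have M0: "0 \<le> M" using My1[of 0] by (smt (verit) norm_ge_zero pi_ge_zero atLeastAtMost_iff)
  define c2 where "c2 = cmod (y2 pi)"
  have c2: "c2 > 0" using y2pi by (simp add: c2_def)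
  define K1 where "K1 = 2 * M^2 + 2 * M^3 / c2"
  have K10: "0 \<le> K1" using M0 c2 by (simp add: K1_def)
  have ptb: "cmod (R1 f x) \<le> K1 * set_lebesgue_integral lborel {0..pi} (\<lambda>t. cmod (f t)) \<and>
             cmod (R2 f x) \<le> K1 * set_lebesgue_integral lborel {0..pi} (\<lambda>t. cmod (f t))"
    if f: "L2_on {0..pi} f" and x: "x \<in> {0..pi}" for f x
  proof -
    define Af where "Af = set_lebesgue_integral lborel {0..pi} (\<lambda>t. cmod (f t))"
    have fi: "set_integrable lborel {0..pi} f" by (rule L2_int[OF f])
    have pi: "pi \<in> {0..pi}" by simp
    have i1: "cmod (I1 f z) \<le> M * Af" if "z \<in> {0..pi}" for z
      unfolding I1_def Af_def by (rule LI_bound[OF fi cy1 My1 that])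
    have i2: "cmod (I2 f z) \<le> M * Af" if "z \<in> {0..pi}" for z
      unfolding I2_def Af_def by (rule LI_bound[OF fi cy2 My2 that])
    have yp: "cmod (YP f z) \<le> 2 * M * (M * Af)" if z: "z \<in> {0..pi}" for z
      unfolding YP_def by (rule comb_bd[OF My2[OF z] My1[OF z] i1[OF z] i2[OF z]])
    have up: "cmod (UP f z) \<le> 2 * M * (M * Af)" if z: "z \<in> {0..pi}" for z
      unfolding UP_def by (rule comb_bd[OF Mu2[OF z] Mu1[OF z] i1[OF z] i2[OF z]])
    have ccb: "cmod (cc f) \<le> 2 * M * (M * Af) / c2"
      unfolding cc_def c2_def using yp[OF pi] c2 by (simp add: norm_divide divide_right_mono c2_def)
    have "cmod (R1 f x) \<le> 2 * M * (M * Af) + 2 * M * (M * Af) / c2 * M"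
      unfolding R1_def by (rule add_bd[OF yp[OF x] ccb My2[OF x]])
    moreover have "cmod (R2 f x) \<le> 2 * M * (M * Af) + 2 * M * (M * Af) / c2 * M"
      unfolding R2_def by (rule add_bd[OF up[OF x] ccb Mu2[OF x]])
    moreover have "2 * M * (M * Af) + 2 * M * (M * Af) / c2 * M = K1 * Af"
      unfolding K1_def by (simp add: field_simps power2_eq_square power3_eq_cube)
    ultimately show ?thesis unfolding Af_def by simp
  qed
  define q where "q = set_lebesgue_integral lborel {0..pi} (\<lambda>t. (cmod (Q t))^2)"
  have q0: "0 \<le> q" unfolding q_def by (rule SI_nonneg) simp
  have Sb: "cmod (R1 f x) \<le> K1 * (sqrt pi * L2_norm {0..pi} f) \<and> cmod (R2 f x) \<le> K1 * (sqrt pi * L2_norm {0..pi} f)"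
    if f: "L2_on {0..pi} f" and x: "x \<in> {0..pi}" for f x
    using ptb[OF f x] CS[OF f] mult_left_mono[OF CS[OF f] K10] by linarith
  have bound1: "\<exists>K. \<forall>f. L2_on {0..pi} f \<longrightarrow>
        (\<exists>g. L2_on {0..pi} g \<and> has_weak_deriv (R1 f) g \<and>
             sqrt ((L2_norm {0..pi} (R1 f))^2 + (L2_norm {0..pi} g)^2) \<le> K * L2_norm {0..pi} f)"
  proof (rule exI, intro allI impI)
    fix f assume f: "L2_on {0..pi} f"
    define N where "N = L2_norm {0..pi} f"
    have N0: "0 \<le> N" unfolding N_def L2_norm_def by (rule real_sqrt_ge_zero, rule SI_nonneg) simp
    define S where "S = K1 * (sqrt pi * N)"
    have S0: "0 \<le> S" using K10 N0 by (simp add: S_def)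
    have c: "continuous_on {0..pi} (R1 f)" "continuous_on {0..pi} (R2 f)" using contR[OF f] by auto
    let ?g = "\<lambda>t. Q t * R1 f t + R2 f t"
    have n1: "(L2_norm {0..pi} (R1 f))^2 \<le> pi * S^2"
      by (rule L2N_pt[OF L2_cont[OF c(1)]]) (use Sb[OF f] in \<open>auto simp: S_def N_def\<close>)
    have n2: "(L2_norm {0..pi} ?g)^2 \<le> 2 * S^2 * q + 2 * pi * S^2"
      unfolding q_def by (rule L2N_comb[OF QL c]) (use Sb[OF f] in \<open>auto simp: S_def N_def\<close>)
    have "(L2_norm {0..pi} (R1 f))^2 + (L2_norm {0..pi} ?g)^2 \<le> (3 * pi + 2 * q) * S^2"
      using n1 n2 by (simp add: algebra_simps)
    also have "\<dots> = (sqrt ((3 * pi + 2 * q) * pi) * K1 * N)^2"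
      using q0 by (simp add: S_def power_mult_distrib algebra_simps)
    finally have "sqrt ((L2_norm {0..pi} (R1 f))^2 + (L2_norm {0..pi} ?g)^2) \<le> sqrt ((sqrt ((3 * pi + 2 * q) * pi) * K1 * N)^2)"
      by (rule real_sqrt_le_mono)
    also have "\<dots> = sqrt ((3 * pi + 2 * q) * pi) * K1 * N"
    proof -
      have "0 \<le> sqrt ((3 * pi + 2 * q) * pi) * K1 * N" using K10 N0 q0 by simp
      then show ?thesis by (simp only: real_sqrt_abs abs_of_nonneg)
    qed
    finally have fin: "sqrt ((L2_norm {0..pi} (R1 f))^2 + (L2_norm {0..pi} ?g)^2) \<le> sqrt ((3 * pi + 2 * q) * pi) * K1 * L2_norm {0..pi} f"
      by (simp add: N_def)
    have "L2_on {0..pi} ?g" by (rule L2_comb[OF QL c])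
    moreover have "has_weak_deriv (R1 f) ?g" using solR[OF f] by (simp add: sol_sys_def)
    ultimately show "\<exists>g. L2_on {0..pi} g \<and> has_weak_deriv (R1 f) g \<and>
             sqrt ((L2_norm {0..pi} (R1 f))^2 + (L2_norm {0..pi} g)^2) \<le> (sqrt ((3 * pi + 2 * q) * pi) * K1) * L2_norm {0..pi} f"
      using fin by (intro exI[of _ ?g]) simp
  qed
  have bound2: "\<exists>K. \<forall>f. L2_on {0..pi} f \<longrightarrow> L2_norm {0..pi} (R2 f) \<le> K * L2_norm {0..pi} f"
  proof (intro exI allI impI)
    fix f assume f: "L2_on {0..pi} f"
    define N where "N = L2_norm {0..pi} f"
    have N0: "0 \<le> N" unfolding N_def L2_norm_def by (rule real_sqrt_ge_zero, rule SI_nonneg) simp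
    define S where "S = K1 * (sqrt pi * N)"
    have c: "continuous_on {0..pi} (R2 f)" using contR[OF f] by auto
    have n: "(L2_norm {0..pi} (R2 f))^2 \<le> pi * S^2"
      by (rule L2N_pt[OF L2_cont[OF c]]) (use Sb[OF f] in \<open>auto simp: S_def N_def\<close>)
    also have "\<dots> = (pi * K1 * N)^2" by (simp add: S_def power_mult_distrib power2_eq_square)
    finally have "(L2_norm {0..pi} (R2 f))^2 \<le> (pi * K1 * N)^2" .
    then have "L2_norm {0..pi} (R2 f) \<le> pi * K1 * N"
      by (rule power2_le_imp_le) (use K10 N0 in simp)
    then show "L2_norm {0..pi} (R2 f) \<le> (pi * K1) * L2_norm {0..pi} f" by (simp add: N_def)
  qed
  show ?thesis
    apply (rule exI[of _ R1], rule exI[of _ R2])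
    using solR R10 R1pi uniqR lin reg bound1 bound2 by blast
qed


end
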